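(* Let $\gamma>1$ and $F(x)=x^\gamma$. Let $u:[0,\infty)\to\mathbb R$ be the unique solution of $$u(T)=\mathbb E\Big[1_{\{\sigma_1>T\}}+\min_{a\in[0,1]}\big(a^\gamma+(1-a)^\gamma u(T-\sigma_1)\big)1_{\{\sigma_1\le T\}}\Big],$$ where $\sigma_1$ is exponentially distributed with rate $\lambda>0$ (the first arrival time of a Poisson process of intensity $\lambda$). Then $u$ satisfies $$\partial_T u(T)=\lambda u(T)\Big(\frac{1}{[1+u(T)^{1/(\gamma-1)}]^{\gamma-1}}-1\Big),\qquad u(0)=1,$$ and the optimal action $a(T)=\arg\min_{a\in[0,1]}\{a^\gamma+(1-a)^\gamma u(T)\}$ satisfies $$\partial_T a(T)=\frac{\lambda}{\gamma-1}a(T)(1-a(T))\big((1-a(T))^{\gamma-1}-1\big)<0,\qquad a(0)=1/2,$$ and $T\mapsto a(T)$ is convex.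
   Context: This is the continuous-sale-amount version of an execution problem: orders arrive according to a Poisson process $N$ of intensity $\lambda$ with arrival times $\sigma_1<\sigma_2<\cdots$; a holding of $x\ge0$ units may be sold in arbitrary real amounts at arrival times, with trade cost $F(\text{size})$ and the remainder $\xi_T$ sold at $T$ at cost $F(\xi_T)$; $u(T)$ is the minimal expected cost per unit of $x^\gamma$, i.e. $\hat u(x,T)=x^\gamma u(T)$. *)

theory Defs
  imports "HOL-Probability.Probability"
begin

text \<open>Cost of a trade of relative size a when the remaining fraction has unit cost v.\<close>
definition trade_cost :: "real \<Rightarrow> real \<Rightarrow> real \<Rightarrow> real" where
  "trade_cost \<gamma> v a = a powr \<gamma> + (1 - a) powr \<gamma> * v"

definition min_cost :: "real \<Rightarrow> real \<Rightarrow> real" where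
  "min_cost \<gamma> v = (INF a\<in>{0..1}. trade_cost \<gamma> v a)"

definition solves_value_eq :: "real \<Rightarrow> real \<Rightarrow> (real \<Rightarrow> real) \<Rightarrow> bool" where
  "solves_value_eq lam \<gamma> u \<longleftrightarrow>
     (\<forall>T\<ge>0. u T = (\<integral>s. (if s > T then 1 else min_cost \<gamma> (u (T - s)))
                      \<partial>(density lborel (exponential_density lam))))"

end

theory Submission
  imports Defs
begin

lemma tc_bounds:
  assumes "a \<in> {0..1::real}" "\<gamma> > 1"
  shows "0 \<le> (1-a) powr \<gamma>" "(1-a) powr \<gamma> \<le> 1" "0 \<le> a powr \<gamma>"
  using assms by (auto intro!: powr_le1)

lemma tc_lower: assumes "a \<in> {0..1::real}" "\<gamma> > 1" shows "trade_cost \<gamma> v a \<ge> min v 0"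
proof -
  have "(1-a) powr \<gamma> * v \<ge> min v 0"
  proof (cases "v \<ge> 0")
    case True thus ?thesis using tc_bounds[OF assms] by simp
  next
    case False
    hence "(1-a) powr \<gamma> * v \<ge> 1 * v" using tc_bounds[OF assms]
      by (intro mult_right_mono_neg) auto
    thus ?thesis by simp
  qed
  thus ?thesis using tc_bounds(3)[OF assms] unfolding trade_cost_def by linarith
qed

lemma mc_bdd: assumes "\<gamma> > 1" shows "bdd_below ((trade_cost \<gamma> v) ` {0..1})"
  using tc_lower[OF _ assms] by (intro bdd_belowI2) auto

lemma mc_le_tc: assumes "\<gamma> > 1" "a \<in> {0..1}" shows "min_cost \<gamma> v \<le> trade_cost \<gamma> v a"
  unfolding min_cost_def by (rule cINF_lower[OF mc_bdd[OF assms(1)] assms(2)])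

lemma mc_ge: assumes "\<gamma> > 1" "\<And>a. a \<in> {0..1} \<Longrightarrow> c \<le> trade_cost \<gamma> v a"
  shows "c \<le> min_cost \<gamma> v"
  unfolding min_cost_def using assms(2) by (intro cINF_greatest) auto

lemma mc_le1: assumes "\<gamma> > 1" shows "min_cost \<gamma> v \<le> 1"
  using mc_le_tc[OF assms, of 1] assms by (simp add: trade_cost_def)

lemma mc_lower: assumes "\<gamma> > 1" shows "min_cost \<gamma> v \<ge> min v 0"
  using mc_ge[OF assms] tc_lower[OF _ assms] by blast

lemma mc_lip: assumes "\<gamma> > 1" shows "\<bar>min_cost \<gamma> v - min_cost \<gamma> v'\<bar> \<le> \<bar>v - v'\<bar>"
proof -
  have *: "min_cost \<gamma> x - \<bar>x - y\<bar> \<le> min_cost \<gamma> y" for x y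
  proof (rule mc_ge[OF assms])
    fix a :: real assume a: "a \<in> {0..1}"
    have "\<bar>(1-a) powr \<gamma> * x - (1-a) powr \<gamma> * y\<bar> = (1-a) powr \<gamma> * \<bar>x - y\<bar>"
      using tc_bounds[OF a assms] by (simp add: abs_mult right_diff_distrib[symmetric])
    also have "\<dots> \<le> \<bar>x - y\<bar>" using tc_bounds[OF a assms]
      by (simp add: mult_left_le_one_le)
    finally have "trade_cost \<gamma> x a \<le> trade_cost \<gamma> y a + \<bar>x - y\<bar>"
      unfolding trade_cost_def by linarith
    thus "min_cost \<gamma> x - \<bar>x - y\<bar> \<le> trade_cost \<gamma> y a"
      using mc_le_tc[OF assms a, of x] by linarith
  qed
  show ?thesis using *[of v v'] *[of v' v] by (simp add: abs_minus_commute)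
qed

lemma mc_cont: assumes "\<gamma> > 1" shows "continuous_on S (min_cost \<gamma>)"
  unfolding continuous_on_iff
proof (intro ballI allI impI)
  fix x e :: real assume "e > 0"
  thus "\<exists>d>0. \<forall>x'\<in>S. dist x' x < d \<longrightarrow> dist (min_cost \<gamma> x') (min_cost \<gamma> x) < e"
    using mc_lip[OF assms] by (metis dist_real_def le_less_trans)
qed

lemma powr_split: "x > 0 \<Longrightarrow> (x::real) powr \<gamma> = x * x powr (\<gamma> - 1)"
proof -
  assume x: "x > 0"
  have "x powr \<gamma> = x powr (1 + (\<gamma> - 1))" by simp
  also have "\<dots> = x powr 1 * x powr (\<gamma> - 1)" by (rule powr_add)
  finally show ?thesis using x by simp
qed

lemma powr_less_iff2: "0 < (p::real) \<Longrightarrow> 0 < x \<Longrightarrow> 0 < y \<Longrightarrow> x powr p < y powr p \<longleftrightarrow> x < y"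
  using powr_less_mono2[of p x y] powr_less_cancel2[of p x y] by auto

lemma tc_cont: assumes "\<gamma> > 1" shows "continuous_on {0..1} (trade_cost \<gamma> v)"
proof -
  have "continuous_on {0..1} (\<lambda>x::real. x powr \<gamma>)"
    by (rule continuous_on_powr') (use assms in \<open>auto intro: continuous_on_id continuous_on_const\<close>)
  moreover have "continuous_on {0..1} (\<lambda>x::real. (1 - x) powr \<gamma>)"
    by (rule continuous_on_powr') (use assms in \<open>auto intro!: continuous_on_diff continuous_on_id continuous_on_const\<close>)
  ultimately show ?thesis unfolding trade_cost_def
    by (intro continuous_on_add continuous_on_mult continuous_on_const)
qed

lemma tc_deriv: assumes "\<gamma> > 1" "0 < b" "b < 1"
  shows "(trade_cost \<gamma> v has_real_derivative
           \<gamma> * (b powr (\<gamma>-1) - v * (1-b) powr (\<gamma>-1))) (at b)"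
proof -
  have d1: "((\<lambda>x. x powr \<gamma>) has_real_derivative \<gamma> * b powr (\<gamma> - real 1) * 1) (at b)"
    by (rule DERIV_fun_powr[OF DERIV_ident]) (use assms in simp)
  have d2: "((\<lambda>x. (1 - x) powr \<gamma>) has_real_derivative \<gamma> * (1 - b) powr (\<gamma> - real 1) * (0 - 1)) (at b)"
    by (rule DERIV_fun_powr[OF DERIV_diff[OF DERIV_const DERIV_ident]]) (use assms in simp)
  have "((\<lambda>x. x powr \<gamma> + (1 - x) powr \<gamma> * v) has_real_derivative
     \<gamma> * b powr (\<gamma> - real 1) * 1 + (\<gamma> * (1 - b) powr (\<gamma> - real 1) * (0 - 1)) * v) (at b)"
    by (intro DERIV_add DERIV_cmult_right d1 d2)
  thus ?thesis unfolding trade_cost_def by (simp add: algebra_simps)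
qed

lemma opt:
  assumes g: "\<gamma> > 1" and v: "v > 0"
  defines "w \<equiv> v powr (1/(\<gamma>-1))"
  defines "a \<equiv> w / (1 + w)"
  shows "0 < a" "a < 1" "trade_cost \<gamma> v a = v / (1 + w) powr (\<gamma> - 1)"
    "\<And>b. b \<in> {0..1} \<Longrightarrow> b \<noteq> a \<Longrightarrow> trade_cost \<gamma> v a < trade_cost \<gamma> v b"
proof -
  have w: "w > 0" using v by (simp add: w_def)
  have wv: "w powr (\<gamma> - 1) = v" using v g by (simp add: w_def powr_powr)
  show a0: "0 < a" "a < 1" using w by (auto simp: a_def)
  have 1: "1 - a = 1 / (1 + w)" using w by (simp add: a_def field_simps)
  show "trade_cost \<gamma> v a = v / (1 + w) powr (\<gamma> - 1)"
  proof -
    have "trade_cost \<gamma> v a = w powr \<gamma> / (1+w) powr \<gamma> + v / (1+w) powr \<gamma>"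
      unfolding trade_cost_def 1 using w by (simp add: a_def powr_divide)
    also have "\<dots> = (w * v + v) / ((1+w) * (1+w) powr (\<gamma>-1))"
      using w by (simp add: powr_split[of w \<gamma>] powr_split[of "1+w" \<gamma>] wv add_divide_distrib)
    also have "\<dots> = v / (1 + w) powr (\<gamma> - 1)"
    proof -
      have p: "(1+w) powr (\<gamma>-1) > 0" using w by simp
      have "w * v + v = (1+w) * v" by (simp add: algebra_simps)
      thus ?thesis using w p by simp
    qed
    finally show ?thesis .
  qed
  have sgn: "(b powr (\<gamma>-1) - v * (1-b) powr (\<gamma>-1) < 0) \<longleftrightarrow> b < a"
    if b: "0 < b" "b < 1" for b
  proof -
    have P: "(1-b) powr (\<gamma>-1) > 0" using b by simp
    have "b powr (\<gamma>-1) - v * (1-b) powr (\<gamma>-1) < 0 \<longleftrightarrow> (b/(1-b)) powr (\<gamma>-1) < w powr (\<gamma>-1)"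
      using b P by (simp add: powr_divide wv pos_divide_less_eq[OF P])
    also have "\<dots> \<longleftrightarrow> b/(1-b) < w" using b g w by (intro powr_less_iff2) auto
    also have "\<dots> \<longleftrightarrow> b < a" using b w by (simp add: a_def field_simps)
    finally show ?thesis .
  qed
  have sgn2: "(b powr (\<gamma>-1) - v * (1-b) powr (\<gamma>-1) > 0) \<longleftrightarrow> b > a"
    if b: "0 < b" "b < 1" for b
  proof -
    have P: "(1-b) powr (\<gamma>-1) > 0" using b by simp
    have "b powr (\<gamma>-1) - v * (1-b) powr (\<gamma>-1) > 0 \<longleftrightarrow> (b/(1-b)) powr (\<gamma>-1) > w powr (\<gamma>-1)"
      using b P by (simp add: powr_divide wv pos_less_divide_eq[OF P])
    also have "\<dots> \<longleftrightarrow> b/(1-b) > w" using b g w by (intro powr_less_iff2) auto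
    also have "\<dots> \<longleftrightarrow> b > a" using b w by (simp add: a_def field_simps)
    finally show ?thesis .
  qed
  fix b assume b: "b \<in> {0..1}" "b \<noteq> a"
  show "trade_cost \<gamma> v a < trade_cost \<gamma> v b"
  proof (cases "b < a")
    case True
    show ?thesis
    proof (rule DERIV_neg_imp_decreasing_open[OF True])
      fix x assume x: "b < x" "x < a"
      hence "0 < x" "x < 1" using b a0 by auto
      note d = tc_deriv[OF g this, of v]
      have "\<gamma> * (x powr (\<gamma> - 1) - v * (1 - x) powr (\<gamma> - 1)) < 0"
        using sgn[of x] x g \<open>0 < x\<close> \<open>x < 1\<close> by (auto simp: mult_pos_neg)
      thus "\<exists>y. (trade_cost \<gamma> v has_real_derivative y) (at x) \<and> y < 0"
        using d by blast
    next
      show "continuous_on {b..a} (trade_cost \<gamma> v)"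
        by (rule continuous_on_subset[OF tc_cont[OF g]]) (use b a0 in auto)
    qed
  next
    case False
    hence ab: "a < b" using b by auto
    show ?thesis
    proof (rule DERIV_pos_imp_increasing_open[OF ab])
      fix x assume x: "a < x" "x < b"
      hence "0 < x" "x < 1" using b a0 by auto
      note d = tc_deriv[OF g this, of v]
      have "\<gamma> * (x powr (\<gamma> - 1) - v * (1 - x) powr (\<gamma> - 1)) > 0"
        using sgn2[of x] x g \<open>0 < x\<close> \<open>x < 1\<close> by auto
      thus "\<exists>y. (trade_cost \<gamma> v has_real_derivative y) (at x) \<and> y > 0"
        using d by blast
    next
      show "continuous_on {a..b} (trade_cost \<gamma> v)"
        by (rule continuous_on_subset[OF tc_cont[OF g]]) (use b a0 in auto)
    qed
  qed
qed

lemma int_rep: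
  assumes g: "\<gamma> > 1" and l: "lam > 0" and sv: "solves_value_eq lam \<gamma> u"
   and um: "u \<in> borel_measurable (restrict_space lborel {0..})"
   and ub: "\<And>x. x \<ge> 0 \<Longrightarrow> \<bar>u x\<bar> \<le> B"
   and T: "T \<ge> 0"
  shows "(\<lambda>r. lam * exp (lam * r) * (1 - min_cost \<gamma> (u r))) integrable_on {0..T}"
    "u T = 1 - exp (- lam * T) * integral {0..T} (\<lambda>r. lam * exp (lam * r) * (1 - min_cost \<gamma> (u r)))"
proof -
  define m where "m = min_cost \<gamma>"
  define K where "K r = lam * exp (lam * r) * (1 - m (u r))" for r
  define ut where "ut r = indicator {0..} r * u r" for r :: real
  have B0: "0 \<le> B" using ub[of 0] by simp
  have utm[measurable]: "ut \<in> borel_measurable lborel"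
    using um unfolding ut_def by (subst (asm) borel_measurable_restrict_space_iff) auto
  have mm[measurable]: "m \<in> borel_measurable borel"
    unfolding m_def by (rule borel_measurable_continuous_onI[OF mc_cont[OF g]])
  have mb: "- B \<le> m (u x) \<and> m (u x) \<le> 1" if "x \<ge> 0" for x
    using mc_le1[OF g, of "u x"] mc_lower[OF g, of "u x"] ub[OF that] unfolding m_def
    by auto
  define f where "f s = (if s > T then 1 else m (u (T - s)))" for s
  have f_eq: "f = (\<lambda>s. if s > T then 1 else m (ut (T - s)))"
    by (rule ext) (auto simp: f_def ut_def)
  have fm[measurable]: "f \<in> borel_measurable lborel"
    unfolding f_eq by measurable
  define D where "D = density lborel (exponential_density lam)"
  have P: "prob_space D" unfolding D_def by (rule prob_space_exponential_density[OF l])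
  have mD: "borel_measurable D = borel_measurable lborel"
    unfolding D_def by (rule measurable_cong_sets[OF sets_density refl])
  have fb: "norm (f s) \<le> 1 + B" for s
    using mb[of "T - s"] B0 by (auto simp: f_def)
  have fi: "integrable D f"
    using fm mD fb by (intro finite_measure.integrable_const_bound[where B="1+B"]
        prob_space.axioms(1)[OF P]) auto
  have c1: "integrable D (\<lambda>_. 1::real)"
    by (intro finite_measure.integrable_const prob_space.axioms(1)[OF P])
  have ee: "exp ((x - T) * lam) = exp (- (lam * T)) * exp (lam * x)" for x
    by (simp add: mult_exp_exp algebra_simps)
  have "u T = integral\<^sup>L D f"
    using sv T unfolding solves_value_eq_def D_def f_def m_def by auto
  also have "\<dots> = integral\<^sup>L D (\<lambda>_. 1) - integral\<^sup>L D (\<lambda>s. 1 - f s)"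
    using fi c1 by simp
  also have "integral\<^sup>L D (\<lambda>_. 1::real) = 1"
    using prob_space.prob_space[OF P] by simp
  also have "integral\<^sup>L D (\<lambda>s. 1 - f s) = (\<integral>s. exponential_density lam s * (1 - f s) \<partial>lborel)"
    unfolding D_def using l by (subst integral_density) auto
  also have "\<dots> = (\<integral>s. indicator {0..T} s * (lam * exp (- s * lam) * (1 - m (u (T - s)))) \<partial>lborel)"
    by (rule Bochner_Integration.integral_cong)
       (auto simp: exponential_density_def f_def indicator_def)
  also have "\<dots> = (\<integral>x. exp (- lam * T) * (indicator {0..T} x * K x) \<partial>lborel)"
    apply (subst lborel_integral_real_affine[where c="-1" and t=T])
     apply simp
    apply (simp only: abs_minus_cancel abs_one scaleR_one)
    apply (rule Bochner_Integration.integral_cong[OF refl])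
    apply (auto simp: indicator_def K_def ee)
    done
  also have "\<dots> = exp (- lam * T) * (\<integral>x. indicator {0..T} x * K x \<partial>lborel)"
    by simp
  finally have uT: "u T = 1 - exp (- lam * T) * (\<integral>x. indicator {0..T} x * K x \<partial>lborel)" .
  have Kb: "norm (K x) \<le> lam * exp (lam * T) * (1 + B)" if "x \<in> {0..T}" for x
  proof -
    have "norm (K x) = lam * exp (lam * x) * \<bar>1 - m (u x)\<bar>"
      using l by (simp add: K_def abs_mult)
    also have "\<dots> \<le> lam * exp (lam * T) * (1 + B)"
      using mb[of x] that l by (intro mult_mono) auto
    finally show ?thesis .
  qed
  have si: "set_integrable lborel {0..T} K"
    unfolding set_integrable_def
  proof (rule integrableI_bounded_set[where A="{0..T}" and B="lam * exp (lam * T) * (1 + B)"])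
    have "(\<lambda>x. indicator {0..T} x *\<^sub>R K x) = (\<lambda>x. indicator {0..T} x * (lam * exp (lam * x) * (1 - m (ut x))))"
      by (rule ext) (auto simp: indicator_def K_def ut_def)
    thus "(\<lambda>x. indicator {0..T} x *\<^sub>R K x) \<in> borel_measurable lborel" by simp
    show "AE x in lborel. x \<in> {0..T} \<longrightarrow> norm (indicator {0..T} x *\<^sub>R K x) \<le> lam * exp (lam * T) * (1 + B)"
      using Kb by (auto simp: indicator_def)
  qed (use T in \<open>auto simp: emeasure_lborel_Icc\<close>)
  have Kd: "K = (\<lambda>r. lam * exp (lam * r) * (1 - min_cost \<gamma> (u r)))"
    by (rule ext) (simp add: K_def m_def)
  have "(\<integral>x. indicator {0..T} x * K x \<partial>lborel) = integral {0..T} K"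
    using set_borel_integral_eq_integral(2)[OF si] by (simp add: set_lebesgue_integral_def)
  with uT show "u T = 1 - exp (- lam * T) * integral {0..T} (\<lambda>r. lam * exp (lam * r) * (1 - min_cost \<gamma> (u r)))"
    by (simp add: Kd)
  show "(\<lambda>r. lam * exp (lam * r) * (1 - min_cost \<gamma> (u r))) integrable_on {0..T}"
    using set_borel_integral_eq_integral(1)[OF si] by (simp add: Kd)
qed

definition KK :: "real \<Rightarrow> real \<Rightarrow> (real \<Rightarrow> real) \<Rightarrow> real \<Rightarrow> real" where
  "KK lam \<gamma> u r = lam * exp (lam * r) * (1 - min_cost \<gamma> (u r))"

context
  fixes lam \<gamma> B :: real and u :: "real \<Rightarrow> real"
  assumes g: "\<gamma> > 1" and l: "lam > 0" and sv: "solves_value_eq lam \<gamma> u"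
   and um: "u \<in> borel_measurable (restrict_space lborel {0..})"
   and ub: "\<And>x. x \<ge> 0 \<Longrightarrow> \<bar>u x\<bar> \<le> B"
begin

lemma rep: "T \<ge> 0 \<Longrightarrow> u T = 1 - exp (- lam * T) * integral {0..T} (KK lam \<gamma> u)"
  using int_rep(2)[OF g l sv um ub] unfolding KK_def[abs_def] by blast

lemma Kint: "T \<ge> 0 \<Longrightarrow> KK lam \<gamma> u integrable_on {0..T}"
  using int_rep(1)[OF g l sv um ub] unfolding KK_def[abs_def] by blast

lemma ucont: assumes b: "b \<ge> 0" shows "continuous_on {0..b} u"
proof -
  have "continuous_on {0..b} (\<lambda>x. 1 - exp (- lam * x) * integral {0..x} (KK lam \<gamma> u))"
    by (intro continuous_intros indefinite_integral_continuous_1 Kint b)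
  thus ?thesis by (rule continuous_on_cong[THEN iffD1, rotated 2]) (auto simp: rep)
qed

lemma Kcont: assumes b: "b \<ge> 0" shows "continuous_on {0..b} (KK lam \<gamma> u)"
proof -
  have "continuous_on {0..b} (\<lambda>x. min_cost \<gamma> (u x))"
    by (rule continuous_on_compose2[OF mc_cont[OF g] ucont[OF b]]) auto
  thus ?thesis unfolding KK_def[abs_def] by (intro continuous_intros)
qed

lemma u0: "u 0 = 1"
  using rep[of 0] by simp

lemma ule1: assumes T: "T \<ge> 0" shows "u T \<le> 1"
proof -
  have "0 \<le> integral {0..T} (KK lam \<gamma> u)"
    using Kint[OF T] mc_le1[OF g] l
    by (intro integral_nonneg) (auto simp: KK_def)
  thus ?thesis using rep[OF T] by (simp add: mult_nonneg_nonneg)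
qed

lemma uderiv: assumes T: "T \<ge> 0"
  shows "(u has_real_derivative lam * (min_cost \<gamma> (u T) - u T)) (at T within {0..})"
proof -
  define b where "b = T + 1"
  have b: "b \<ge> 0" "T \<in> {0..b}" using T by (auto simp: b_def)
  define H where "H x = integral {0..x} (KK lam \<gamma> u)" for x
  have Hd: "(H has_real_derivative KK lam \<gamma> u T) (at T within {0..b})"
    unfolding has_real_derivative_iff_has_vector_derivative H_def
    by (rule integral_has_vector_derivative[OF Kcont[OF b(1)] b(2)])
  have e: "((\<lambda>x. exp (- lam * x)) has_real_derivative exp (- lam * T) * (- lam)) (at T within {0..b})"
    by (auto intro!: derivative_eq_intros)
  have d0: "((\<lambda>x. 1 - exp (- lam * x) * H x) has_real_derivative
        0 - (exp (- lam * T) * (- lam) * H T + KK lam \<gamma> u T * exp (- lam * T))) (at T within {0..b})"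
    by (intro DERIV_diff DERIV_const DERIV_mult e Hd)
  have val: "0 - (exp (- lam * T) * (- lam) * H T + KK lam \<gamma> u T * exp (- lam * T))
      = lam * (min_cost \<gamma> (u T) - u T)"
  proof -
    have "exp (- lam * T) * H T = 1 - u T" using rep[OF T] by (simp add: H_def)
    hence "lam * (exp (- lam * T) * H T) = lam * (1 - u T)" by simp
    moreover have "KK lam \<gamma> u T * exp (- lam * T) = lam * (1 - min_cost \<gamma> (u T))"
      by (simp add: KK_def mult_exp_exp)
    ultimately show ?thesis by (simp add: algebra_simps)
  qed
  note d = DERIV_cong[OF d0 val]
  have d2: "(u has_real_derivative lam * (min_cost \<gamma> (u T) - u T)) (at T within {0..b})"
    by (rule has_field_derivative_transform_within[OF d, of 1])
       (use b in \<open>auto simp: rep H_def\<close>)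
  have "at T within {0..} = at T within {0..b}"
    by (rule at_within_nhd[of T "{..<b}"]) (auto simp: b_def)
  with d2 show ?thesis by simp
qed

lemma upos: assumes T1: "T1 \<ge> 0" shows "u T1 > 0"
proof (rule ccontr)
  assume "\<not> u T1 > 0" hence n: "u T1 \<le> 0" by simp
  define S where "S = {0..T1} \<inter> u -` {..0}"
  have cl: "closed S" unfolding S_def
    by (rule continuous_closed_preimage[OF ucont[OF T1]]) auto
  have ne: "S \<noteq> {}" using T1 n by (auto simp: S_def)
  have bb: "bdd_below S" unfolding S_def by (rule bdd_belowI[of _ 0]) auto
  define T0 where "T0 = Inf S"
  have T0S: "T0 \<in> S" unfolding T0_def by (rule closed_contains_Inf[OF ne bb cl])
  hence T0: "0 \<le> T0" "T0 \<le> T1" "u T0 \<le> 0" by (auto simp: S_def)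
  have pos: "u t > 0" if "0 \<le> t" "t < T0" for t
  proof (rule ccontr)
    assume "\<not> u t > 0"
    hence "t \<in> S" using that T0 by (auto simp: S_def)
    hence "T0 \<le> t" unfolding T0_def by (rule cInf_lower[OF _ bb])
    with that show False by simp
  qed
  define G where "G t = u t * exp (lam * t)" for t
  have "G 0 \<le> G T0"
  proof (rule DERIV_nonneg_imp_increasing_open[OF T0(1)])
    fix t assume t: "0 < t" "t < T0"
    have du: "(u has_real_derivative lam * (min_cost \<gamma> (u t) - u t)) (at t)"
    proof -
      have "(u has_real_derivative lam * (min_cost \<gamma> (u t) - u t)) (at t within {0<..})"
        by (rule has_field_derivative_subset[OF uderiv[of t]]) (use t in auto)
      thus ?thesis using t by (simp add: at_within_open[of t "{0<..}"])
    qed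
    have e2: "((\<lambda>x. exp (lam * x)) has_real_derivative exp (lam * t) * lam) (at t)"
      by (auto intro!: derivative_eq_intros)
    have dG: "(G has_real_derivative lam * (min_cost \<gamma> (u t) - u t) * exp (lam * t) + exp (lam * t) * lam * u t) (at t)"
      unfolding G_def[abs_def] by (rule DERIV_mult[OF du e2])
    have "min_cost \<gamma> (u t) \<ge> 0" using mc_lower[OF g, of "u t"] pos[of t] t by simp
    hence "0 \<le> lam * (min_cost \<gamma> (u t) - u t) * exp (lam * t) + exp (lam * t) * lam * u t"
      using l by (simp add: algebra_simps)
    thus "\<exists>y. (G has_real_derivative y) (at t) \<and> 0 \<le> y" using dG by blast
  next
    show "continuous_on {0..T0} G" unfolding G_def[abs_def]
      by (intro continuous_intros ucont T0(1))
  qed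
  moreover have "G T0 \<le> 0" using T0(3) by (simp add: G_def mult_nonpos_nonneg)
  ultimately show False using u0 by (simp add: G_def)
qed

end

lemma convex_from_deriv:
  fixes f f' :: "real \<Rightarrow> real"
  assumes cont: "continuous_on {0..} f"
    and d: "\<And>x. x > 0 \<Longrightarrow> (f has_real_derivative f' x) (at x)"
    and mono: "\<And>x y. 0 < x \<Longrightarrow> x \<le> y \<Longrightarrow> f' x \<le> f' y"
  shows "convex_on {0..} f"
proof (rule convex_on_linorderI)
  show "convex {0::real..}" by (rule convex_real_interval)
next
  fix t x y :: real
  assume t: "t > 0" "t < 1"
  assume xy: "x \<in> {0..}" "y \<in> {0..}" "x < y"
  define z where "z = (1 - t) * x + t * y"
  from xy t have xz: "z > x" by (simp add: z_def algebra_simps)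
  have "y - z = (1 - t) * (y - x)" by (simp add: z_def algebra_simps)
  also from xy t have "\<dots> > 0" by (intro mult_pos_pos) simp_all
  finally have yz: "z < y" by simp
  have cI: "continuous_on {p..q} f" if "0 \<le> p" for p q
    by (rule continuous_on_subset[OF cont]) (use that in auto)
  have diff: "f differentiable (at s)" if "0 < s" for s
    using d[OF that] unfolding real_differentiable_def by blast
  have "\<exists>l \<xi>. x < \<xi> \<and> \<xi> < z \<and> (f has_real_derivative l) (at \<xi>) \<and> f z - f x = (z - x) * l"
    by (rule MVT[OF xz cI]) (use xy in \<open>auto intro: diff\<close>)
  then obtain l \<xi> where \<xi>: "x < \<xi>" "\<xi> < z" "(f has_real_derivative l) (at \<xi>)" "f z - f x = (z - x) * l"
    by blast
  have l: "l = f' \<xi>" using DERIV_unique[OF \<xi>(3) d[of \<xi>]] \<xi> xy by simp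
  have "\<exists>k \<eta>. z < \<eta> \<and> \<eta> < y \<and> (f has_real_derivative k) (at \<eta>) \<and> f y - f z = (y - z) * k"
    by (rule MVT[OF yz cI]) (use xy xz in \<open>auto intro: diff\<close>)
  then obtain k \<eta> where \<eta>: "z < \<eta>" "\<eta> < y" "(f has_real_derivative k) (at \<eta>)" "f y - f z = (y - z) * k"
    by blast
  have k: "k = f' \<eta>" using DERIV_unique[OF \<eta>(3) d[of \<eta>]] \<eta> xy xz by simp
  have "f' \<xi> \<le> f' \<eta>" using mono[of \<xi> \<eta>] \<xi> \<eta> xy by simp
  hence "(f z - f x) / (z - x) \<le> (f y - f z) / (y - z)"
    using \<xi>(4) \<eta>(4) l k xz yz by simp
  hence "(f y - f z) * (z - x) \<ge> (f z - f x) * (y - z)"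
    using xz yz by (simp add: field_simps)
  also have "z - x = t * (y - x)" by (simp add: z_def algebra_simps)
  also have "y - z = (1 - t) * (y - x)" by (simp add: z_def algebra_simps)
  finally have "(f y - f z) * t \<ge> (f z - f x) * (1 - t)" using xy by simp
  then show "f ((1 - t) *\<^sub>R x + t *\<^sub>R y) \<le> (1 - t) * f x + t * f y"
    by (simp add: z_def algebra_simps)
qed

definition hh :: "real \<Rightarrow> real \<Rightarrow> real \<Rightarrow> real" where
  "hh c \<gamma> x = c * (x * (1 - x) * ((1 - x) powr (\<gamma> - 1) - 1))"

lemma hh_deriv:
  assumes g: "\<gamma> > 1" and x: "0 < x" "x < 1"
  shows "(hh c \<gamma> has_real_derivative
     c * ((1 - 2*x) * ((1 - x) powr (\<gamma> - 1) - 1) + x * (1 - x) * ((\<gamma> - 1) * (1 - x) powr (\<gamma> - 1 - real 1) * (0 - 1)))) (at x)"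
proof -
  have d2: "((\<lambda>x. (1 - x) powr (\<gamma> - 1)) has_real_derivative (\<gamma> - 1) * (1 - x) powr (\<gamma> - 1 - real 1) * (0 - 1)) (at x)"
    by (rule DERIV_fun_powr[OF DERIV_diff[OF DERIV_const DERIV_ident]]) (use x in simp)
  have d1: "((\<lambda>x. x * (1 - x)) has_real_derivative 1 - 2 * x) (at x)"
    by (auto intro!: derivative_eq_intros)
  have "((\<lambda>x. c * (x * (1 - x) * ((1 - x) powr (\<gamma> - 1) - 1))) has_real_derivative
     c * ((1 - 2*x) * ((1 - x) powr (\<gamma> - 1) - 1) + ((\<gamma> - 1) * (1 - x) powr (\<gamma> - 1 - real 1) * (0 - 1) - 0) * (x * (1 - x)))) (at x)"
    by (intro DERIV_cmult DERIV_mult d1 DERIV_diff d2 DERIV_const)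
  thus ?thesis unfolding hh_def[abs_def] by (simp add: algebra_simps)
qed

lemma hh_deriv_nonpos:
  assumes g: "\<gamma> > 1" and x: "0 < x" "x \<le> 1/2" and c: "c \<ge> 0"
  shows "c * ((1 - 2*x) * ((1 - x) powr (\<gamma> - 1) - 1) + x * (1 - x) * ((\<gamma> - 1) * (1 - x) powr (\<gamma> - 1 - real 1) * (0 - 1))) \<le> 0"
proof -
  define q where "q = (1 - x) powr (\<gamma> - 1)"
  have q: "0 < q" "q \<le> 1" using x g by (auto simp: q_def intro!: powr_le1)
  have qq: "(1 - x) * (1 - x) powr (\<gamma> - 1 - real 1) = q"
    using powr_split[of "1 - x" "\<gamma> - 1"] x by (simp add: q_def)
  have "(1 - 2*x) * (q - 1) + x * (1 - x) * ((\<gamma> - 1) * (1 - x) powr (\<gamma> - 1 - real 1) * (0 - 1))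
      = q * (1 - x - \<gamma> * x) - (1 - 2 * x)"
  proof -
    have "x * (1 - x) * ((\<gamma> - 1) * (1 - x) powr (\<gamma> - 1 - real 1) * (0 - 1))
        = - x * (\<gamma> - 1) * ((1 - x) * (1 - x) powr (\<gamma> - 1 - real 1))" by (simp add: algebra_simps)
    also have "\<dots> = - x * (\<gamma> - 1) * q" by (simp only: qq)
    finally show ?thesis by (simp add: algebra_simps)
  qed
  moreover have "q * (1 - x - \<gamma> * x) - (1 - 2 * x) \<le> 0"
  proof (cases "1 - x - \<gamma> * x \<le> 0")
    case True
    hence "q * (1 - x - \<gamma> * x) \<le> 0" using q by (simp add: mult_nonneg_nonpos)
    thus ?thesis using x by simp
  next
    case False
    hence "q * (1 - x - \<gamma> * x) \<le> 1 * (1 - x - \<gamma> * x)" using q by (intro mult_right_mono) auto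
    moreover have "x \<le> \<gamma> * x" using mult_right_mono[of 1 \<gamma> x] g x by simp
    ultimately show ?thesis by simp
  qed
  ultimately show ?thesis using c unfolding q_def by (simp add: mult_nonneg_nonpos)
qed

lemma hh_mono:
  assumes g: "\<gamma> > 1" and c: "c \<ge> 0" and xy: "0 < x" "x \<le> y" "y \<le> 1/2"
  shows "hh c \<gamma> y \<le> hh c \<gamma> x"
proof (rule DERIV_nonpos_imp_nonincreasing[OF xy(2)])
  fix t assume t: "x \<le> t" "t \<le> y"
  show "\<exists>d. (hh c \<gamma> has_real_derivative d) (at t) \<and> d \<le> 0"
    using hh_deriv[OF g, of t c] hh_deriv_nonpos[OF g _ _ c, of t] t xy by auto
qed

lemma phi_deriv:
  assumes g: "\<gamma> > 1" and v: "v > 0"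
  shows "((\<lambda>v. v powr (1/(\<gamma>-1)) / (1 + v powr (1/(\<gamma>-1)))) has_real_derivative
      (1/(\<gamma>-1)) * v powr (1/(\<gamma>-1) - 1) / (1 + v powr (1/(\<gamma>-1)))^2) (at v)"
proof -
  define p where "p = 1/(\<gamma>-1)"
  define w where "w = v powr p"
  have w: "w > 0" using v by (simp add: w_def)
  have d1: "((\<lambda>v. v powr p) has_real_derivative p * v powr (p - real 1) * 1) (at v)"
    by (rule DERIV_fun_powr[OF DERIV_ident]) (use v in simp)
  have "((\<lambda>v. v powr p / (1 + v powr p)) has_real_derivative
      ((p * v powr (p - real 1) * 1) * (1 + v powr p) - v powr p * (0 + p * v powr (p - real 1) * 1)) /
      ((1 + v powr p) * (1 + v powr p))) (at v)"
    using w unfolding w_def by (intro DERIV_divide DERIV_add DERIV_const d1) linarith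
  moreover have "((p * v powr (p - real 1) * 1) * (1 + v powr p) - v powr p * (0 + p * v powr (p - real 1) * 1)) /
      ((1 + v powr p) * (1 + v powr p)) = p * v powr (p - 1) / (1 + v powr p)^2"
    by (simp add: algebra_simps power2_eq_square)
  ultimately show ?thesis unfolding p_def by simp
qed

theorem corollary3p8:
  fixes lam \<gamma> :: real and u a :: "real \<Rightarrow> real"
  assumes "\<gamma> > 1" and "lam > 0"
    and "solves_value_eq lam \<gamma> u"
    and "u \<in> borel_measurable (restrict_space lborel {0..})"
    and "bounded (u ` {0..})"
    and "\<And>T. T \<ge> 0 \<Longrightarrow> a T \<in> {0..1} \<and>
            (\<forall>b\<in>{0..1}. trade_cost \<gamma> (u T) (a T) \<le> trade_cost \<gamma> (u T) b)"
  shows "(\<forall>T\<ge>0. (u has_real_derivative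
            lam * u T * (1 / (1 + u T powr (1 / (\<gamma> - 1))) powr (\<gamma> - 1) - 1))
            (at T within {0..})) \<and> u 0 = 1
       \<and> (\<forall>T\<ge>0. (a has_real_derivative
            lam / (\<gamma> - 1) * a T * (1 - a T) * ((1 - a T) powr (\<gamma> - 1) - 1))
            (at T within {0..})
          \<and> lam / (\<gamma> - 1) * a T * (1 - a T) * ((1 - a T) powr (\<gamma> - 1) - 1) < 0)
       \<and> a 0 = 1 / 2
       \<and> convex_on {0..} a"
proof -
  note g = assms(1) and l = assms(2) and sv = assms(3) and um = assms(4)
  obtain B where ub: "\<And>x. x \<ge> 0 \<Longrightarrow> \<bar>u x\<bar> \<le> B"
    using assms(5) unfolding bounded_iff by auto
  define p where "p = 1/(\<gamma>-1)"
  have p: "p > 0" using g by (simp add: p_def)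
  define W where "W T = u T powr p" for T
  define c where "c = lam / (\<gamma> - 1)"
  have c: "c > 0" using g l by (simp add: c_def)
  have up: "0 < u T" "u T \<le> 1" if "T \<ge> 0" for T
    using upos[OF g l sv um ub that] ule1[OF g l sv um ub that] by auto
  have W: "0 < W T" "W T \<le> 1" if "T \<ge> 0" for T
    using up[OF that] p by (auto simp: W_def intro: powr_le1)
  have aT: "a T = W T / (1 + W T)" if T: "T \<ge> 0" for T
  proof (rule ccontr)
    assume ne: "a T \<noteq> W T / (1 + W T)"
    have "trade_cost \<gamma> (u T) (W T / (1 + W T)) < trade_cost \<gamma> (u T) (a T)"
      using opt(4)[OF g up(1)[OF T], of "a T"] assms(6)[OF T] ne by (simp add: W_def p_def)
    moreover have "W T / (1 + W T) \<in> {0..1}" using W[OF T] by auto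
    ultimately show False using assms(6)[OF T] by fastforce
  qed
  have a01: "0 < a T" "a T \<le> 1/2" "a T < 1" if T: "T \<ge> 0" for T
    using W[OF T] by (auto simp: aT[OF T] field_simps)
  have mcT: "min_cost \<gamma> (u T) = u T / (1 + W T) powr (\<gamma> - 1)" if T: "T \<ge> 0" for T
  proof (rule antisym)
    have "W T / (1 + W T) \<in> {0..1}" using W[OF T] by auto
    from mc_le_tc[OF g this, of "u T"] show "min_cost \<gamma> (u T) \<le> u T / (1 + W T) powr (\<gamma> - 1)"
      using opt(3)[OF g up(1)[OF T]] by (simp add: W_def p_def)
  next
    show "u T / (1 + W T) powr (\<gamma> - 1) \<le> min_cost \<gamma> (u T)"
    proof (rule mc_ge[OF g])
      fix b :: real assume b: "b \<in> {0..1}"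
      show "u T / (1 + W T) powr (\<gamma> - 1) \<le> trade_cost \<gamma> (u T) b"
        using opt(3)[OF g up(1)[OF T]] opt(4)[OF g up(1)[OF T], of b] b
        by (cases "b = W T / (1 + W T)") (auto simp: W_def p_def)
    qed
  qed
  have uD: "(u has_real_derivative
            lam * u T * (1 / (1 + u T powr (1 / (\<gamma> - 1))) powr (\<gamma> - 1) - 1))
            (at T within {0..})" if T: "T \<ge> 0" for T
  proof -
    have eq: "lam * (min_cost \<gamma> (u T) - u T) = lam * u T * (1 / (1 + u T powr (1 / (\<gamma> - 1))) powr (\<gamma> - 1) - 1)"
      using mcT[OF T] by (simp add: W_def p_def algebra_simps)
    show ?thesis using uderiv[OF g l sv um ub T] unfolding eq .
  qed
  define phi where "phi v = v powr p / (1 + v powr p)" for v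
  have hhe: "hh c \<gamma> y = c * y * (1 - y) * ((1 - y) powr (\<gamma> - 1) - 1)" for y
    by (simp add: hh_def mult.assoc)
  have aD: "(a has_real_derivative hh c \<gamma> (a T)) (at T within {0..})" if T: "T \<ge> 0" for T
  proof -
    have U: "u T > 0" using up[OF T] by simp
    have pd: "(phi has_real_derivative p * (u T) powr (p - 1) / (1 + W T)^2) (at (u T))"
      unfolding phi_def[abs_def] p_def W_def by (rule phi_deriv[OF g U])
    have cd: "((\<lambda>x. phi (u x)) has_real_derivative
        (p * (u T) powr (p - 1) / (1 + W T)^2) * (lam * (min_cost \<gamma> (u T) - u T))) (at T within {0..})"
      by (rule DERIV_chain2[OF pd uderiv[OF g l sv um ub T]])
    define X where "X = (1 + W T) powr (\<gamma> - 1)"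
    define Q where "Q = u T powr (p - 1)"
    have w: "W T > 0" using W[OF T] by simp
    have e1: "Q * u T = W T" using powr_split[of "u T" p] U by (simp add: Q_def W_def mult.commute)
    have e2: "min_cost \<gamma> (u T) - u T = u T * (1 / X - 1)"
      using mcT[OF T] by (simp add: X_def algebra_simps)
    have e3: "1 - a T = 1 / (1 + W T)" using w by (simp add: aT[OF T] field_simps)
    have e4: "(1 - a T) powr (\<gamma> - 1) = 1 / X"
      unfolding e3 X_def using w by (simp add: powr_divide)
    have "(p * (u T) powr (p - 1) / (1 + W T)^2) * (lam * (min_cost \<gamma> (u T) - u T))
        = p * lam * (Q * u T) * (1 / X - 1) / (1 + W T)^2"
      unfolding e2 Q_def by (simp add: algebra_simps)
    also have "\<dots> = (lam * p) * (W T / (1 + W T)) * (1 / (1 + W T)) * (1 / X - 1)"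
      unfolding e1 using w by (simp add: power2_eq_square)
    also have "\<dots> = hh c \<gamma> (a T)"
      unfolding hhe e4 e3[symmetric] aT[OF T, symmetric] by (simp add: c_def p_def)
    finally have val: "(p * (u T) powr (p - 1) / (1 + W T)^2) * (lam * (min_cost \<gamma> (u T) - u T)) = hh c \<gamma> (a T)" .
    show ?thesis
      by (rule has_field_derivative_transform_within[OF cd[unfolded val] zero_less_one])
         (use T in \<open>auto simp: aT W_def phi_def\<close>)
  qed
  have neg: "hh c \<gamma> (a T) < 0" if T: "T \<ge> 0" for T
  proof -
    have "(1 - a T) powr (\<gamma> - 1) < 1" using a01[OF T] g by (simp add: powr01_less_one)
    moreover have "c * a T * (1 - a T) > 0" using a01[OF T] c by simp
    ultimately show ?thesis unfolding hhe by (simp add: mult_pos_neg)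
  qed
  have aDat: "(a has_real_derivative hh c \<gamma> (a x)) (at x)" if x: "x > 0" for x
  proof -
    have "(a has_real_derivative hh c \<gamma> (a x)) (at x within {0<..})"
      by (rule has_field_derivative_subset[OF aD]) (use x in auto)
    thus ?thesis using x by (simp add: at_within_open[of x "{0<..}"])
  qed
  have acont: "continuous_on {0..} a"
    by (rule DERIV_continuous_on[OF aD]) auto
  have conv: "convex_on {0..} a"
  proof (rule convex_from_deriv[OF acont aDat])
    fix x y :: real assume xy: "0 < x" "x \<le> y"
    have ay: "a y \<le> a x"
    proof (rule DERIV_nonpos_imp_decreasing_open[OF xy(2)])
      fix t assume t: "x < t" "t < y"
      show "\<exists>d. (a has_real_derivative d) (at t) \<and> d \<le> 0"
        using aDat[of t] neg[of t] t xy by (intro exI[of _ "hh c \<gamma> (a t)"]) auto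
    next
      show "continuous_on {x..y} a" by (rule continuous_on_subset[OF acont]) (use xy in auto)
    qed
    show "hh c \<gamma> (a x) \<le> hh c \<gamma> (a y)"
      using hh_mono[OF g _ a01(1)[of y] ay a01(2)[of x]] c xy by simp
  qed
  have a0: "a 0 = 1/2" using aT[of 0] u0[OF g l sv um ub] by (simp add: W_def)
  have e: "hh c \<gamma> (a T) = lam / (\<gamma> - 1) * a T * (1 - a T) * ((1 - a T) powr (\<gamma> - 1) - 1)" for T
    by (simp only: hhe) (simp add: c_def)
  show ?thesis
  proof (intro conjI allI impI)
    fix T :: real assume T: "0 \<le> T"
    show "(u has_real_derivative
            lam * u T * (1 / (1 + u T powr (1 / (\<gamma> - 1))) powr (\<gamma> - 1) - 1))
            (at T within {0..})" by (rule uD[OF T])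
    show "(a has_real_derivative
            lam / (\<gamma> - 1) * a T * (1 - a T) * ((1 - a T) powr (\<gamma> - 1) - 1))
            (at T within {0..})" using aD[OF T] unfolding e .
    show "lam / (\<gamma> - 1) * a T * (1 - a T) * ((1 - a T) powr (\<gamma> - 1) - 1) < 0"
      using neg[OF T] unfolding e .
  qed (use u0[OF g l sv um ub] a0 conv in auto)
qed

end
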